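(* Let $0<\omega\le\pi/2$, let $Q$ be a convex polygon, let $\mathcal{W}$ be a nonempty family of $\omega$-wedges each of which contains $Q$, and let $F_Q=\bigcap_{W\in\mathcal{W}} W$. Let $e$ be an edge of $Q$, let $H_e$ be the closed half-plane whose boundary line $\ell_e$ contains $e$ and which does not contain the interior of $Q$, and let $F_{Q,e}=F_Q\cap H_e$. If $F_{Q,e}\not\subseteq \ell_e$, then $F_{Q,e}$ contains a (nondegenerate) triangle one of whose sides is $e$.
   Context: An $\omega$-wedge with apex $q$ is the closed region bounded by two rays emanating from $q$ that form the angle $\omega$, together with all points between them. *)

theory Defs
  imports "HOL-Analysis.Analysis"
begin

definition vangle :: "real^2 \<Rightarrow> real^2 \<Rightarrow> real" where
  "vangle u v = arccos ((u \<bullet> v) / (norm u * norm v))"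

text \<open>An omega-wedge with apex q: the closed region bounded by the rays
  from q in directions u and v (angle omega between them), together with all
  points between them. For 0 < omega < pi this is the set of
  q + s u + t v with s, t >= 0.\<close>
definition wedge :: "real \<Rightarrow> real^2 \<Rightarrow> real^2 \<Rightarrow> real^2 \<Rightarrow> (real^2) set" where
  "wedge \<omega> q u v = {q + s *\<^sub>R u + t *\<^sub>R v | s t. 0 \<le> s \<and> 0 \<le> t}"

definition is_wedge :: "real \<Rightarrow> (real^2) set \<Rightarrow> bool" where
  "is_wedge \<omega> W \<longleftrightarrow> (\<exists>q u v. u \<noteq> 0 \<and> v \<noteq> 0 \<and> vangle u v = \<omega> \<and> W = wedge \<omega> q u v)"

definition convex_polygon :: "(real^2) set \<Rightarrow> bool" where
  "convex_polygon Q \<longleftrightarrow> (\<exists>P. finite P \<and> Q = convex hull P) \<and> interior Q \<noteq> {}"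

end

theory Submission
  imports Defs
begin

lemma convex_wedge: "convex (wedge \<omega> q u v)"
  unfolding convex_def wedge_def
proof (clarify)
  fix s1 t1 s2 t2 :: real and c d :: real
  assume h: "0 \<le> s1" "0 \<le> t1" "0 \<le> s2" "0 \<le> t2" "0 \<le> c" "0 \<le> d" "c + d = 1"
  have eq: "c *\<^sub>R (q + s1 *\<^sub>R u + t1 *\<^sub>R v) + d *\<^sub>R (q + s2 *\<^sub>R u + t2 *\<^sub>R v)
      = q + (c * s1 + d * s2) *\<^sub>R u + (c * t1 + d * t2) *\<^sub>R v"
  proof -
    have "c *\<^sub>R (q + s1 *\<^sub>R u + t1 *\<^sub>R v) + d *\<^sub>R (q + s2 *\<^sub>R u + t2 *\<^sub>R v)
      = (c + d) *\<^sub>R q + (c * s1 + d * s2) *\<^sub>R u + (c * t1 + d * t2) *\<^sub>R v"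
      by (simp add: algebra_simps scaleR_add_left)
    then show ?thesis using h(7) by simp
  qed
  show "\<exists>s t. c *\<^sub>R (q + s1 *\<^sub>R u + t1 *\<^sub>R v) + d *\<^sub>R (q + s2 *\<^sub>R u + t2 *\<^sub>R v)
      = q + s *\<^sub>R u + t *\<^sub>R v \<and> 0 \<le> s \<and> 0 \<le> t"
    by (rule exI[of _ "c * s1 + d * s2"], rule exI[of _ "c * t1 + d * t2"]) (simp add: eq h)
qed

theorem lemma3p5:
  fixes \<omega> :: real and Q :: "(real^2) set" and \<W> :: "(real^2) set set"
    and x y :: "real^2" and a :: "real^2" and b :: real
  assumes "0 < \<omega>" and "\<omega> \<le> pi / 2"
    and "convex_polygon Q"
    and "\<W> \<noteq> {}" and "\<forall>W\<in>\<W>. is_wedge \<omega> W \<and> Q \<subseteq> W"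
    and "x \<noteq> y" and "closed_segment x y face_of Q"
    and "a \<noteq> 0" and "closed_segment x y \<subseteq> {z. a \<bullet> z = b}"
    and "Q \<subseteq> {z. a \<bullet> z \<le> b}"
    and "\<not> (\<Inter>\<W> \<inter> {z. a \<bullet> z \<ge> b} \<subseteq> {z. a \<bullet> z = b})"
  shows "\<exists>p. p \<notin> affine hull {x, y} \<and>
             convex hull {x, y, p} \<subseteq> \<Inter>\<W> \<inter> {z. a \<bullet> z \<ge> b}"
proof -
  let ?F = "\<Inter>\<W> \<inter> {z. a \<bullet> z \<ge> b}"
  have cW: "convex W" if "W \<in> \<W>" for W
    using assms(5) that unfolding is_wedge_def by (auto intro: convex_wedge)
  have cF: "convex ?F"
    by (intro convex_Int convex_Inter convex_halfspace_ge) (use cW in auto)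
  have segQ: "closed_segment x y \<subseteq> Q" using assms(7) face_of_imp_subset by blast
  have xy: "x \<in> closed_segment x y" "y \<in> closed_segment x y" by auto
  have xQ: "x \<in> Q" "y \<in> Q" using xy segQ by auto
  have xb: "a \<bullet> x = b" "a \<bullet> y = b" using xy assms(9) by auto
  have xF: "x \<in> ?F" and yF: "y \<in> ?F"
    using xQ xb assms(5) by auto
  obtain p where pF: "p \<in> ?F" and pn: "a \<bullet> p \<noteq> b" using assms(11) by blast
  have aff: "affine hull {x, y} \<subseteq> {z. a \<bullet> z = b}"
    by (rule hull_minimal) (use xy assms(9) affine_hyperplane in auto)
  have "p \<notin> affine hull {x, y}" using aff pn by blast
  moreover have "convex hull {x, y, p} \<subseteq> ?F"
    by (rule hull_minimal) (use xF yF pF cF in auto)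
  ultimately show ?thesis by blast
qed

end
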